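(* Let $\sigma^2>0$, $P_{\mathrm{tran}}>0$, $\theta_{\mathrm I}>0$, $\rho_{\mathrm{cont}}>0$, $\rho_{\mathrm{out}}\in(0,1)$, $N=\tau f_{\mathrm s}>0$ and $\gamma\ge0$, and let $$a_1=\frac{N(1+\gamma)^2}{2+4\gamma},\qquad b_1=\frac{\sigma^2(2+4\gamma)}{N(1+\gamma)}.$$ Assume $b_1P^{-1}(1-\rho_{\mathrm{out}},a_1)>\sigma^2$ and set $P^{*}=\dfrac{\theta_{\mathrm I}P_{\mathrm{tran}}}{b_1P^{-1}(1-\rho_{\mathrm{out}},a_1)-\sigma^2}$. Then the transmit power constraint $P^{*}\le\rho_{\mathrm{cont}}$ holds if and only if $$\rho_{\mathrm{out}}\le 1-P\!\left(a_1,\ \frac{1}{b_1}\Big(\frac{\theta_{\mathrm I}P_{\mathrm{tran}}}{\rho_{\mathrm{cont}}}+\sigma^2\Big)\right).$$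
   Context: $P(a,x)=\frac{1}{\Gamma(a)}\int_0^x t^{a-1}e^{-t}\,dt$ is the regularized lower incomplete Gamma function and $P^{-1}(y,a)$ is its inverse in the second argument ($P(a,P^{-1}(y,a))=y$ for $y\in(0,1)$). In the paper, $P^{*}$ is the power obtained from an outage constraint on the interference at the primary receiver when the received-power estimate is modeled as Gamma with shape $a_1$ and scale $b_1$; the set of $\gamma$ (for given $\tau$) satisfying the displayed inequality is called the operating regime, and equality defines its boundary $\gamma^*$. *)

theory Defs
  imports "HOL-Analysis.Analysis"
begin

definition reg_lower_gamma :: "real \<Rightarrow> real \<Rightarrow> real" where
  "reg_lower_gamma a x = (1 / Gamma a) * integral {0..x} (\<lambda>t. t powr (a - 1) * exp (- t))"

text \<open>Inverse in the second argument: the x >= 0 with P(a,x) = y (unique for y in (0,1), a > 0).\<close>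
definition inv_reg_lower_gamma :: "real \<Rightarrow> real \<Rightarrow> real" where
  "inv_reg_lower_gamma y a = (THE x. 0 \<le> x \<and> reg_lower_gamma a x = y)"

end

theory Submission imports Defs begin

definition gf :: "real \<Rightarrow> real \<Rightarrow> real" where "gf a t = t powr (a - 1) * exp (- t)"

lemma gf_nonneg: "0 \<le> gf a t" by (simp add: gf_def)

lemma gf_hasint: assumes "a > 0" shows "(gf a has_integral Gamma a) {0..}"
proof -
  have "((\<lambda>t. t powr (a - 1) / exp t) has_integral Gamma a) {0..}"
    using Gamma_integral_real[OF assms] .
  moreover have "(\<lambda>t. t powr (a - 1) / exp t) = gf a"
    by (auto simp: gf_def exp_minus field_simps)
  ultimately show ?thesis by simp
qed

lemma gf_int: assumes "a > 0" "0 \<le> x" shows "gf a integrable_on {0..x}"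
  using integrable_on_subinterval[of "gf a" "{0..}" 0 x] gf_hasint[OF assms(1)] assms(2)
  by (auto simp: integrable_on_def)

lemma gf_lower: assumes "a > 0" "0 < m" "m \<le> t" "t \<le> y"
  shows "min (m powr (a - 1)) (y powr (a - 1)) * exp (- y) \<le> gf a t"
proof -
  have "min (m powr (a - 1)) (y powr (a - 1)) \<le> t powr (a - 1)"
  proof (cases "a \<ge> 1")
    case True
    then have "m powr (a - 1) \<le> t powr (a - 1)" using assms by (intro powr_mono2) auto
    then show ?thesis by linarith
  next
    case False
    then have "y powr (a - 1) \<le> t powr (a - 1)" using assms by (intro powr_mono2') auto
    then show ?thesis by linarith
  qed
  moreover have "exp (- y) \<le> exp (- t)" using assms by simp
  ultimately show ?thesis unfolding gf_def
    by (intro mult_mono) auto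
qed

lemma gf_pos_int: assumes "a > 0" "0 \<le> x" "x < y" shows "integral {x..y} (gf a) > 0"
proof -
  define m where "m = (x + y) / 2"
  define c where "c = min (m powr (a - 1)) (y powr (a - 1)) * exp (- y)"
  have m: "0 < m" "x < m" "m < y" using assms by (auto simp: m_def)
  have c: "c > 0" using m by (simp add: c_def)
  have iy: "gf a integrable_on {x..y}"
    using integrable_on_subinterval[OF gf_int[OF assms(1), of y]] assms by auto
  have i1: "gf a integrable_on {x..m}" using integrable_on_subinterval[OF iy] m by auto
  have i2: "gf a integrable_on {m..y}" using integrable_on_subinterval[OF iy] m by auto
  have lo: "\<And>t. t \<in> {m..y} \<Longrightarrow> c \<le> gf a t"
    using gf_lower[OF assms(1) m(1)] by (auto simp: c_def)
  have "integral {x..m} (gf a) + integral {m..y} (gf a) = integral {x..y} (gf a)"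
    using Henstock_Kurzweil_Integration.integral_combine[OF _ _ iy, of m] m by auto
  moreover have "integral {x..m} (gf a) \<ge> 0"
    using integral_nonneg[OF i1] gf_nonneg by auto
  moreover have "integral {m..y} (gf a) \<ge> integral {m..y} (\<lambda>_. c)"
    by (rule integral_le[OF integrable_const_ivl i2 lo])
  moreover have "integral {m..y} (\<lambda>_. c) = (y - m) * c" using m by simp
  moreover have "(y - m) * c > 0" using m c by simp
  ultimately show ?thesis by linarith
qed

lemma G_mono: assumes "a > 0" "0 \<le> x" "x < y"
  shows "integral {0..x} (gf a) < integral {0..y} (gf a)"
proof -
  have "integral {0..x} (gf a) + integral {x..y} (gf a) = integral {0..y} (gf a)"
    using Henstock_Kurzweil_Integration.integral_combine[OF _ _ gf_int[OF assms(1), of y], of x] assms by auto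
  with gf_pos_int[OF assms] show ?thesis by linarith
qed

lemma G_lim: assumes "a > 0"
  shows "((\<lambda>b. integral {0..b} (gf a)) \<longlongrightarrow> Gamma a) at_top"
proof -
  have ai: "gf a absolutely_integrable_on {0..}"
    by (rule nonnegative_absolutely_integrable_1)
       (use gf_hasint[OF assms] gf_nonneg in \<open>auto simp: integrable_on_def\<close>)
  have "((\<lambda>b. set_lebesgue_integral lebesgue {0..b} (gf a)) \<longlongrightarrow> set_lebesgue_integral lebesgue {0..} (gf a)) at_top"
    by (rule tendsto_set_lebesgue_integral_at_top[OF _ ai]) auto
  moreover have "set_lebesgue_integral lebesgue {0..} (gf a) = Gamma a"
    using set_lebesgue_integral_eq_integral(2)[OF ai] integral_unique[OF gf_hasint[OF assms]] by simp
  ultimately have T: "((\<lambda>b. set_lebesgue_integral lebesgue {0..b} (gf a)) \<longlongrightarrow> Gamma a) at_top"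
    by simp
  have E: "set_lebesgue_integral lebesgue {0..b} (gf a) = integral {0..b} (gf a)" for b
    by (rule set_lebesgue_integral_eq_integral(2), rule set_integrable_subset[OF ai]) auto
  show ?thesis using T unfolding E .
qed

lemma reg_eq: "reg_lower_gamma a x = integral {0..x} (gf a) / Gamma a"
  by (simp add: reg_lower_gamma_def gf_def[abs_def])

lemma reg_mono_iff: assumes "a > 0" "0 \<le> x" "0 \<le> y"
  shows "reg_lower_gamma a x \<le> reg_lower_gamma a y \<longleftrightarrow> x \<le> y"
proof -
  have g: "Gamma a > 0" using assms Gamma_real_pos by auto
  have "integral {0..x} (gf a) \<le> integral {0..y} (gf a) \<longleftrightarrow> x \<le> y"
    using G_mono[OF assms(1) assms(2), of y] G_mono[OF assms(1) assms(3), of x]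
    by (cases "x < y"; cases "y < x") auto
  then show ?thesis using g by (simp add: reg_eq divide_le_cancel)
qed

lemma inv_char: assumes "a > 0" "0 < q" "q < 1"
  shows "0 \<le> inv_reg_lower_gamma q a \<and> reg_lower_gamma a (inv_reg_lower_gamma q a) = q"
proof -
  have g: "Gamma a > 0" using assms Gamma_real_pos by auto
  have "\<forall>\<^sub>F b in at_top. integral {0..b} (gf a) > q * Gamma a"
    using order_tendstoD(1)[OF G_lim[OF assms(1)], of "q * Gamma a"] g assms by simp
  then obtain M where M: "M \<ge> 0" "integral {0..M} (gf a) > q * Gamma a"
  proof -
    obtain N where N: "\<And>n. n \<ge> N \<Longrightarrow> integral {0..n} (gf a) > q * Gamma a"
      using \<open>\<forall>\<^sub>F b in at_top. integral {0..b} (gf a) > q * Gamma a\<close>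
      unfolding eventually_at_top_linorder by blast
    show ?thesis by (rule that[of "max N 0"]) (auto intro: N)
  qed
  have "\<exists>x. 0 \<le> x \<and> x \<le> M \<and> integral {0..x} (gf a) = q * Gamma a"
    using IVT'[of "\<lambda>x. integral {0..x} (gf a)" 0 "q * Gamma a" M] M g assms
      indefinite_integral_continuous_1[OF gf_int[OF assms(1) M(1)]]
    by auto
  then obtain x where x: "0 \<le> x" "reg_lower_gamma a x = q"
    using g by (auto simp: reg_eq)
  have "(THE x. 0 \<le> x \<and> reg_lower_gamma a x = q) = x"
  proof (rule the_equality)
    show "0 \<le> x \<and> reg_lower_gamma a x = q" using x by auto
    fix z assume "0 \<le> z \<and> reg_lower_gamma a z = q"
    then show "z = x" using reg_mono_iff[OF assms(1), of z x] reg_mono_iff[OF assms(1), of x z] x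
      by auto
  qed
  then show ?thesis using x by (simp add: inv_reg_lower_gamma_def)
qed

theorem mainTheorem2:
  fixes \<sigma>2 P_tran \<theta>I \<rho>_cont \<rho>_out N \<gamma> a1 b1 Pstar :: real
  assumes "\<sigma>2 > 0" and "P_tran > 0" and "\<theta>I > 0" and "\<rho>_cont > 0"
    and "0 < \<rho>_out" and "\<rho>_out < 1" and "N > 0" and "\<gamma> \<ge> 0"
    and a1_def: "a1 = N * (1 + \<gamma>)^2 / (2 + 4 * \<gamma>)"
    and b1_def: "b1 = \<sigma>2 * (2 + 4 * \<gamma>) / (N * (1 + \<gamma>))"
    and pos: "b1 * inv_reg_lower_gamma (1 - \<rho>_out) a1 > \<sigma>2"
    and Pstar_def: "Pstar = \<theta>I * P_tran / (b1 * inv_reg_lower_gamma (1 - \<rho>_out) a1 - \<sigma>2)"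
  shows "Pstar \<le> \<rho>_cont \<longleftrightarrow>
         \<rho>_out \<le> 1 - reg_lower_gamma a1 ((1 / b1) * (\<theta>I * P_tran / \<rho>_cont + \<sigma>2))"
proof -
  have a: "a1 > 0" using assms by (simp add: a1_def)
  have b: "b1 > 0" using assms by (simp add: b1_def)
  define x0 where "x0 = inv_reg_lower_gamma (1 - \<rho>_out) a1"
  define z where "z = (1 / b1) * (\<theta>I * P_tran / \<rho>_cont + \<sigma>2)"
  have x0: "0 \<le> x0" "reg_lower_gamma a1 x0 = 1 - \<rho>_out"
    using inv_char[OF a, of "1 - \<rho>_out"] assms by (auto simp: x0_def)
  have z: "0 \<le> z" using assms b by (simp add: z_def)
  have d: "b1 * x0 - \<sigma>2 > 0" using pos by (simp add: x0_def)
  have "Pstar \<le> \<rho>_cont \<longleftrightarrow> \<theta>I * P_tran \<le> \<rho>_cont * (b1 * x0 - \<sigma>2)"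
    using d by (simp add: Pstar_def x0_def[symmetric] divide_le_eq mult.commute)
  also have "\<dots> \<longleftrightarrow> \<theta>I * P_tran / \<rho>_cont \<le> b1 * x0 - \<sigma>2"
    using \<open>\<rho>_cont > 0\<close> by (simp add: pos_divide_le_eq mult.commute)
  also have "\<dots> \<longleftrightarrow> \<theta>I * P_tran / \<rho>_cont + \<sigma>2 \<le> b1 * x0"
    by linarith
  also have "\<dots> \<longleftrightarrow> z \<le> x0"
    using b by (simp add: z_def field_simps)
  also have "\<dots> \<longleftrightarrow> reg_lower_gamma a1 z \<le> reg_lower_gamma a1 x0"
    using reg_mono_iff[OF a z x0(1)] by simp
  finally show ?thesis using x0 by (simp add: z_def) linarith
qed

end
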